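(* Let $n\ge3$ and $j\ge0$. Then $\mathcal{N}_j\subseteq N_{\mathcal{B}}(\mathbb{Z}\mathcal{N}_{j-1})$, where $N_{\mathcal{B}}(\mathbb{Z}\mathcal{N}_{j-1})=\{b\in\mathcal{B}: [b,m]\in\mathbb{Z}\mathcal{N}_{j-1}\text{ for all } m\in\mathbb{Z}\mathcal{N}_{j-1}\}$ and $\mathbb{Z}\mathcal{N}_{j-1}$ is the $\mathbb{Z}$-span of $\mathcal{N}_{j-1}$ in $\mathfrak{L}(n)$.
   Context: Fix an integer $n\ge 3$. A partition is a sequence $\Lambda=(\lambda_j)_{j\ge1}$ of non-negative integers with finite support; $\mathrm{wt}(\Lambda)=\sum_j j\lambda_j$; $\mathrm{Part}(k)$ is the set of partitions with $\lambda_j=0$ for $j>k$. Write $x^\Lambda=\prod_j x_j^{\lambda_j}$, $\deg(x^\Lambda)=\sum_j\lambda_j$, and let $\partial_k$ be the partial derivative with respect to $x_k$. $\mathfrak{L}(n)$ is the free $\mathbb{Z}$-module with basis $\mathcal{B}=\{x^\Lambda\partial_k : 1\le k\le n,\ \Lambda\in\mathrm{Part}(k-1)\}$, a Lie ring with bracket defined on basis elements by $[x^\Lambda\partial_k,x^\Theta\partial_j]=\partial_j(x^\Lambda)x^\Theta\partial_k$ if $j<k$, $-x^\Lambda\partial_k(x^\Theta)\partial_j$ if $j>k$, $0$ if $j=k$, extended bilinearly. For an integer $i\ge-1$, let $r_i\in\{1,\dots,n-1\}$ with $i\equiv r_i\pmod{n-1}$ and $h_i=\lfloor (i-1)/(n-1)\rfloor+1$.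 Define $\mathrm{WD}(x^\Lambda\partial_k)=\mathrm{wt}(\Lambda)-\deg(x^\Lambda)+n-k$ and $\mathrm{lev}_i(x^\Lambda\partial_k)=h_i\,\mathrm{WD}(x^\Lambda\partial_k)+\deg(x^\Lambda)-1$. For $i\ge-1$, $\mathcal{N}_i=\{b\in\mathcal{B}: \mathrm{lev}_j(b)\le j\text{ for some integer } -1\le j\le i\}$. *)

theory Defs
  imports Main
begin

(* A partition Lambda = (lambda_j)_{j>=1} is represented by a function nat => nat;
   index 0 is unused and required to be 0. *)
type_synonym partition = "nat \<Rightarrow> nat"

(* basis element x^Lambda d_k is represented by the pair (Lambda, k) *)
type_synonym basis_elt = "partition \<times> nat"

(* elements of L(n): integer coordinate vectors w.r.t. the basis *)
type_synonym lelt = "basis_elt \<Rightarrow> int"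

definition Part :: "nat \<Rightarrow> partition set" where
  "Part k = {L. \<forall>j. (j = 0 \<or> j > k) \<longrightarrow> L j = 0}"

definition wt :: "partition \<Rightarrow> nat" where
  "wt L = (\<Sum>j\<in>{j. L j \<noteq> 0}. j * L j)"

definition pdeg :: "partition \<Rightarrow> nat" where
  "pdeg L = (\<Sum>j\<in>{j. L j \<noteq> 0}. L j)"

definition Bas :: "nat \<Rightarrow> basis_elt set" where
  "Bas n = {(L, k). 1 \<le> k \<and> k \<le> n \<and> L \<in> Part (k - 1)}"

definition Lmod :: "nat \<Rightarrow> lelt set" where
  "Lmod n = {v. finite {b. v b \<noteq> 0} \<and> {b. v b \<noteq> 0} \<subseteq> Bas n}"

definition bvec :: "basis_elt \<Rightarrow> lelt" where
  "bvec b = (\<lambda>d. if d = b then 1 else 0)"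

definition smul :: "int \<Rightarrow> lelt \<Rightarrow> lelt" where
  "smul c v = (\<lambda>d. c * v d)"

(* bracket of basis elements:
   [x^L d_k, x^T d_j] = d_j(x^L) x^T d_k   if j < k
                      = - x^L d_k(x^T) d_j if j > k
                      = 0                  if j = k *)
definition brb :: "basis_elt \<Rightarrow> basis_elt \<Rightarrow> lelt" where
  "brb b c = (case b of (L, k) \<Rightarrow> case c of (T, j) \<Rightarrow>
     if j < k then smul (int (L j)) (bvec ((\<lambda>i. L i + T i)(j := L j - 1 + T j), k))
     else if k < j then smul (- int (T k)) (bvec ((\<lambda>i. L i + T i)(k := L k + T k - 1), j))
     else (\<lambda>_. 0))"

definition br :: "lelt \<Rightarrow> lelt \<Rightarrow> lelt" where
  "br u v = (\<lambda>d. \<Sum>b\<in>{b. u b \<noteq> 0}. \<Sum>c\<in>{c. v c \<noteq> 0}. u b * v c * brb b c d)"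

definition zspan :: "basis_elt set \<Rightarrow> lelt set" where
  "zspan S = {v. \<exists>F a. finite F \<and> F \<subseteq> S \<and> v = (\<lambda>d. \<Sum>b\<in>F. a b * bvec b d)}"

definition WD :: "nat \<Rightarrow> basis_elt \<Rightarrow> int" where
  "WD n b = (case b of (L, k) \<Rightarrow> int (wt L) - int (pdeg L) + int n - int k)"

definition hh :: "nat \<Rightarrow> int \<Rightarrow> int" where
  "hh n i = (i - 1) div (int n - 1) + 1"

definition lev :: "nat \<Rightarrow> int \<Rightarrow> basis_elt \<Rightarrow> int" where
  "lev n i b = hh n i * WD n b + int (pdeg (fst b)) - 1"

definition NN :: "nat \<Rightarrow> int \<Rightarrow> basis_elt set" where
  "NN n i = {b \<in> Bas n. \<exists>j. -1 \<le> j \<and> j \<le> i \<and> lev n j b \<le> j}"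

definition normB :: "nat \<Rightarrow> lelt set \<Rightarrow> basis_elt set" where
  "normB n M = {b \<in> Bas n. \<forall>m\<in>M. br (bvec b) m \<in> M}"

end

theory Submission imports Defs begin

lemma hh_props:
  assumes "n \<ge> 3" "t \<ge> -1"
  shows "hh n t \<ge> 0" "t \<le> hh n t * (int n - 1)" "(hh n t - 1) * (int n - 1) < t"
proof -
  define H where "H = int n - 1"
  have H2: "H \<ge> 2" using assms(1) unfolding H_def by linarith
  define q where "q = (t - 1) div H"
  define r where "r = (t - 1) mod H"
  have dm: "t - 1 = q * H + r" unfolding q_def r_def by simp
  have r0: "0 \<le> r" "r < H" unfolding r_def using H2 by auto
  have hq: "hh n t = q + 1" unfolding hh_def q_def H_def by simp
  have "q \<ge> -1"
  proof (rule ccontr)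
    assume "\<not> q \<ge> -1"
    then have "q \<le> -2" by simp
    then have "q * H \<le> (-2) * H" using H2 by (intro mult_right_mono) auto
    then show False using dm r0 assms(2) H2 by linarith
  qed
  then show "hh n t \<ge> 0" using hq by simp
  show "t \<le> hh n t * (int n - 1)" using dm r0 unfolding hq H_def[symmetric]
    by (simp add: distrib_right)
  show "(hh n t - 1) * (int n - 1) < t" using dm r0 unfolding hq H_def[symmetric]
    by simp
qed

lemma hh_mult:
  assumes "n \<ge> 3" "h \<ge> 0"
  shows "hh n (h * (int n - 1)) = h"
proof -
  define H where "H = int n - 1"
  have H2: "H \<ge> 2" using assms(1) unfolding H_def by linarith
  have t: "h * H \<ge> -1" using assms H2 by (smt (verit) mult_nonneg_nonneg)
  have a: "h * H \<le> hh n (h * H) * H" and b: "(hh n (h*H) - 1) * H < h * H"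
    using hh_props[OF assms(1) t] unfolding H_def by auto
  have "h \<le> hh n (h * H)" using a H2 by (simp add: mult_le_cancel_right)
  moreover have "hh n (h*H) - 1 < h" using b H2 by (simp add: mult_less_cancel_right)
  ultimately show ?thesis unfolding H_def by simp
qed

lemma from_h:
  assumes n: "n \<ge> 3" and W: "W \<ge> 0" and h: "h \<ge> 0" and i: "i \<ge> -1"
    and l1: "h * W + D - 1 \<le> h * (int n - 1)" and l2: "h * W + D - 1 \<le> i"
  shows "\<exists>t. -1 \<le> t \<and> t \<le> i \<and> hh n t * W + D - 1 \<le> t"
proof (cases "h < hh n i")
  case True
  define H where "H = int n - 1"
  have H2: "H \<ge> 2" using n unfolding H_def by linarith
  have "(hh n i - 1) * H < i" using hh_props[OF n i] unfolding H_def by auto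
  moreover have "h * H \<le> (hh n i - 1) * H" using True H2 by (simp add: mult_right_mono)
  ultimately have "h * H \<le> i" by simp
  moreover have "hh n (h * H) = h" using hh_mult[OF n h] unfolding H_def .
  moreover have "h * H \<ge> -1" using h H2 by (smt (verit) mult_nonneg_nonneg)
  ultimately show ?thesis using l1 unfolding H_def[symmetric] by (intro exI[of _ "h*H"]) auto
next
  case False
  then have "hh n i * W \<le> h * W" using W by (simp add: mult_right_mono)
  then show ?thesis using l2 i by (intro exI[of _ i]) auto
qed

lemma core:
  fixes H Wb Db Wc Dc hb hc j :: int
  assumes H: "H \<ge> 1" and Db: "Db \<ge> 0" and Dc: "Dc \<ge> 0"
    and Wb1: "Db \<le> 1 \<Longrightarrow> Wb \<le> H - Db" and Wc1: "Dc \<le> 1 \<Longrightarrow> Wc \<le> H - Dc"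
    and hb: "hb \<ge> 0" "hb * Wb + Db - 1 \<le> hb * H" "hb * Wb + Db - 1 \<le> j"
    and hc: "hc \<ge> 0" "hc * Wc + Dc - 1 \<le> hc * H" "hc * Wc + Dc - 1 \<le> j - 1"
  shows "\<exists>h\<ge>0. h * (Wb + Wc - H) + (Db + Dc - 1) - 1 \<le> h * H
              \<and> h * (Wb + Wc - H) + (Db + Dc - 1) - 1 \<le> j - 1"
proof -
  have WbH: "Wb \<le> H"
  proof (rule ccontr)
    assume "\<not> Wb \<le> H"
    then have "hb * (Wb - H) \<ge> 0" using hb(1) by simp
    moreover have "Db \<ge> 2" using Wb1 \<open>\<not> Wb \<le> H\<close> Db by linarith
    ultimately show False using hb(2) by (simp add: algebra_simps)
  qed
  have WcH: "Wc \<le> H"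
  proof (rule ccontr)
    assume "\<not> Wc \<le> H"
    then have "hc * (Wc - H) \<ge> 0" using hc(1) by simp
    moreover have "Dc \<ge> 2" using Wc1 \<open>\<not> Wc \<le> H\<close> Dc by linarith
    ultimately show False using hc(2) by (simp add: algebra_simps)
  qed
  show ?thesis
  proof (cases "hb \<le> hc")
    case True
    have "(hc - hb) * (Wb - H) \<le> 0" using True WbH by (simp add: mult_nonneg_nonpos)
    then have fb: "hc * (Wb - H) + Db - 1 \<le> 0" using hb(2) by (simp add: algebra_simps)
    show ?thesis
      apply (rule exI[of _ hc])
      using fb hc by (simp add: algebra_simps)
  next
    case False
    have fc: "hb * (Wc - H) + Dc - 1 \<le> -1"
    proof (cases "Wc < H")
      case True
      have "(hb - hc) * (H - Wc) \<ge> 1" using False True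
        by (metis diff_gt_0_iff_gt int_one_le_iff_zero_less mult_pos_pos not_le)
      then show ?thesis using hc(2) by (simp add: algebra_simps)
    next
      case False
      then have "Wc = H" using WcH by simp
      then have "Dc = 0" using hc(2) Wc1 Dc by (simp add: algebra_simps)
      then show ?thesis using \<open>Wc = H\<close> by simp
    qed
    have fb: "hb * (Wb - H) + Db - 1 \<le> 0" using hb(2) by (simp add: algebra_simps)
    show ?thesis
      apply (rule exI[of _ hb])
      using fb fc hb by (simp add: algebra_simps)
  qed
qed


lemma Part_supp: "L \<in> Part m \<Longrightarrow> {j. L j \<noteq> 0} \<subseteq> {1..m}"
proof
  fix x assume "x \<in> {j. L j \<noteq> 0}" "L \<in> Part m"
  then show "x \<in> {1..m}" unfolding Part_def
    by (metis (mono_tags, lifting) atLeastAtMost_iff less_one linorder_not_le mem_Collect_eq)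
qed

lemma wt_Part: "L \<in> Part m \<Longrightarrow> wt L = (\<Sum>j=1..m. j * L j)"
  unfolding wt_def by (rule sum.mono_neutral_left) (use Part_supp[of L m] in auto)

lemma pdeg_Part: "L \<in> Part m \<Longrightarrow> pdeg L = (\<Sum>j=1..m. L j)"
  unfolding pdeg_def by (rule sum.mono_neutral_left) (use Part_supp[of L m] in auto)

lemma Part_mono: "L \<in> Part m \<Longrightarrow> m \<le> m' \<Longrightarrow> L \<in> Part m'"
  unfolding Part_def by auto

lemma wt_bounds:
  assumes "L \<in> Part m" shows "pdeg L \<le> wt L" "wt L \<le> m * pdeg L"
proof -
  show "pdeg L \<le> wt L" unfolding wt_Part[OF assms] pdeg_Part[OF assms]
    by (rule sum_mono) auto
  have "(\<Sum>j=1..m. j * L j) \<le> (\<Sum>j=1..m. m * L j)" by (rule sum_mono) auto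
  then show "wt L \<le> m * pdeg L" unfolding wt_Part[OF assms] pdeg_Part[OF assms]
    by (simp add: sum_distrib_left)
qed

lemma Bas_facts:
  assumes "(L, k) \<in> Bas n"
  shows "WD n (L,k) \<ge> 0" "pdeg L \<le> 1 \<Longrightarrow> WD n (L,k) \<le> int n - 1 - int (pdeg L)"
proof -
  have k: "1 \<le> k" "k \<le> n" and P: "L \<in> Part (k - 1)" using assms unfolding Bas_def by auto
  note wb = wt_bounds[OF P]
  show "WD n (L,k) \<ge> 0" using wb k unfolding WD_def by simp
  assume "pdeg L \<le> 1"
  then consider "pdeg L = 0" | "pdeg L = 1" by linarith
  then show "WD n (L,k) \<le> int n - 1 - int (pdeg L)"
  proof cases
    case 1 then show ?thesis using wb k unfolding WD_def by simp
  next
    case 2 then show ?thesis using wb k unfolding WD_def by simp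
  qed
qed

lemma br_case:
  assumes b: "(L,k) \<in> Bas n" and c: "(T,l) \<in> Bas n" and lk: "l < k" and nz: "L l \<noteq> 0"
    and Pd: "P = (\<lambda>i. L i + T i)(l := L l - 1 + T l)"
  shows "(P,k) \<in> Bas n" "WD n (P,k) = WD n (L,k) + WD n (T,l) - (int n - 1)"
    "int (pdeg P) = int (pdeg L) + int (pdeg T) - 1"
proof -
  have k: "1 \<le> k" "k \<le> n" and PL: "L \<in> Part (k - 1)" using b unfolding Bas_def by auto
  have l: "1 \<le> l" "l \<le> n" and PT0: "T \<in> Part (l - 1)" using c unfolding Bas_def by auto
  have PT: "T \<in> Part (k - 1)" using Part_mono[OF PT0] lk by simp
  have PP: "P \<in> Part (k - 1)" using PL PT lk l unfolding Part_def Pd by auto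
  show "(P,k) \<in> Bas n" using PP k unfolding Bas_def by auto
  have lin: "l \<in> {1..k-1}" using l lk by auto
  have ip: "\<And>i. int (P i) = int (L i) + int (T i) - (if i = l then 1 else 0)"
    using nz unfolding Pd by auto
  have "int (pdeg P) = (\<Sum>i=1..k-1. int (P i))" unfolding pdeg_Part[OF PP] by simp
  also have "\<dots> = (\<Sum>i=1..k-1. int (L i)) + (\<Sum>i=1..k-1. int (T i)) - (\<Sum>i=1..k-1. (if i = l then 1 else 0))"
    unfolding ip by (simp add: sum.distrib sum_subtractf)
  also have "\<dots> = int (pdeg L) + int (pdeg T) - 1"
    unfolding pdeg_Part[OF PL] pdeg_Part[OF PT] using lin by simp
  finally show pd: "int (pdeg P) = int (pdeg L) + int (pdeg T) - 1" .
  have iw: "\<And>i. int (i * P i) = int (i * L i) + int (i * T i) - (if i = l then int l else 0)"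
    using nz unfolding Pd by (auto simp: algebra_simps)
  have "int (wt P) = (\<Sum>i=1..k-1. int (i * P i))" unfolding wt_Part[OF PP] by simp
  also have "\<dots> = (\<Sum>i=1..k-1. int (i * L i)) + (\<Sum>i=1..k-1. int (i * T i)) - (\<Sum>i=1..k-1. (if i = l then int l else 0))"
    unfolding iw by (simp add: sum.distrib sum_subtractf)
  also have "\<dots> = int (wt L) + int (wt T) - int l"
    unfolding wt_Part[OF PL] wt_Part[OF PT] using lin by simp
  finally have w: "int (wt P) = int (wt L) + int (wt T) - int l" .
  show "WD n (P,k) = WD n (L,k) + WD n (T,l) - (int n - 1)"
    unfolding WD_def using w pd by simp
qed


lemma to_h:
  assumes n: "n \<ge> 3" and b: "b \<in> NN n i"
  shows "\<exists>h\<ge>0. h * WD n b + int (pdeg (fst b)) - 1 \<le> h * (int n - 1)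
               \<and> h * WD n b + int (pdeg (fst b)) - 1 \<le> i"
proof -
  obtain t where t: "-1 \<le> t" "t \<le> i" "lev n t b \<le> t" using b unfolding NN_def by auto
  show ?thesis using hh_props[OF n t(1)] t unfolding lev_def
    by (intro exI[of _ "hh n t"]) auto
qed

lemma G:
  assumes n: "n \<ge> 3" and j: "j \<ge> 0" and b: "b \<in> NN n j" and c: "c \<in> NN n (j - 1)"
    and d: "d \<in> Bas n" and W: "WD n d = WD n b + WD n c - (int n - 1)"
    and D: "int (pdeg (fst d)) = int (pdeg (fst b)) + int (pdeg (fst c)) - 1"
  shows "d \<in> NN n (j - 1)"
proof -
  have bB: "b \<in> Bas n" and cB: "c \<in> Bas n" using b c unfolding NN_def by auto
  obtain hb where hb: "hb \<ge> 0" "hb * WD n b + int (pdeg (fst b)) - 1 \<le> hb * (int n - 1)"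
      "hb * WD n b + int (pdeg (fst b)) - 1 \<le> j" using to_h[OF n b] by auto
  obtain hc where hc: "hc \<ge> 0" "hc * WD n c + int (pdeg (fst c)) - 1 \<le> hc * (int n - 1)"
      "hc * WD n c + int (pdeg (fst c)) - 1 \<le> j - 1" using to_h[OF n c] by auto
  have fb: "int (pdeg (fst b)) \<le> 1 \<Longrightarrow> WD n b \<le> (int n - 1) - int (pdeg (fst b))"
    using Bas_facts(2)[of "fst b" "snd b" n] bB by auto
  have fc: "int (pdeg (fst c)) \<le> 1 \<Longrightarrow> WD n c \<le> (int n - 1) - int (pdeg (fst c))"
    using Bas_facts(2)[of "fst c" "snd c" n] cB by auto
  obtain h where h: "h \<ge> 0"
      "h * (WD n b + WD n c - (int n - 1)) + (int (pdeg (fst b)) + int (pdeg (fst c)) - 1) - 1 \<le> h * (int n - 1)"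
      "h * (WD n b + WD n c - (int n - 1)) + (int (pdeg (fst b)) + int (pdeg (fst c)) - 1) - 1 \<le> j - 1"
    using core[of "int n - 1" "int (pdeg (fst b))" "int (pdeg (fst c))" "WD n b" "WD n c" hb j hc,
       OF _ _ _ fb fc hb hc] n by auto
  have Wd: "WD n d \<ge> 0" using Bas_facts(1)[of "fst d" "snd d" n] d by auto
  obtain t where "-1 \<le> t" "t \<le> j - 1" "hh n t * WD n d + int (pdeg (fst d)) - 1 \<le> t"
    using from_h[OF n Wd h(1), of "j - 1" "int (pdeg (fst d))"] h(2,3) j unfolding W D by auto
  then show ?thesis using d unfolding NN_def lev_def by auto
qed

lemma K:
  assumes n: "n \<ge> 3" and j: "j \<ge> 0" and b: "b \<in> NN n j" and c: "c \<in> NN n (j - 1)"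
    and nz: "brb b c d \<noteq> 0"
  shows "d \<in> NN n (j - 1)"
proof -
  obtain L k where bk: "b = (L,k)" by (cases b)
  obtain T l where cl: "c = (T,l)" by (cases c)
  have bB: "(L,k) \<in> Bas n" and cB: "(T,l) \<in> Bas n" using b c bk cl unfolding NN_def by auto
  consider "l < k" | "k < l" | "k = l" by linarith
  then show ?thesis
  proof cases
    case 1
    define P where "P = (\<lambda>i. L i + T i)(l := L l - 1 + T l)"
    have "brb b c d = smul (int (L l)) (bvec (P, k)) d" unfolding brb_def bk cl P_def using 1 by simp
    with nz have Ll: "L l \<noteq> 0" and dd: "d = (P,k)" unfolding smul_def bvec_def
      by (auto split: if_splits)
    note bc = br_case[OF bB cB 1 Ll P_def]
    show ?thesis using G[OF n j b c] bc bk cl dd by auto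
  next
    case 2
    define P where "P = (\<lambda>i. L i + T i)(k := L k + T k - 1)"
    have "brb b c d = smul (- int (T k)) (bvec (P, l)) d" unfolding brb_def bk cl P_def using 2 by simp
    with nz have Tk: "T k \<noteq> 0" and dd: "d = (P,l)" unfolding smul_def bvec_def
      by (auto split: if_splits)
    have P': "P = (\<lambda>i. T i + L i)(k := T k - 1 + L k)" unfolding P_def using Tk by (auto simp: add.commute)
    note bc = br_case[OF cB bB 2 Tk P']
    show ?thesis using G[OF n j b c] bc bk cl dd by auto
  next
    case 3
    then have "brb b c d = 0" unfolding brb_def bk cl by simp
    with nz show ?thesis by simp
  qed
qed

lemma zspan_char: "zspan S = {v. finite {b. v b \<noteq> 0} \<and> {b. v b \<noteq> 0} \<subseteq> S}"
proof (intro set_eqI iffI)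
  fix v :: lelt assume "v \<in> zspan S"
  then obtain F a where F: "finite F" "F \<subseteq> S" "v = (\<lambda>d. \<Sum>b\<in>F. a b * bvec b d)"
    unfolding zspan_def by auto
  have "\<And>d. v d = (if d \<in> F then a d else 0)" unfolding F(3) bvec_def
    using F(1) by (simp add: if_distrib[where f="\<lambda>x. _ * x"] sum.delta' cong: if_cong)
  then have "{b. v b \<noteq> 0} \<subseteq> F" by auto
  then show "v \<in> {v. finite {b. v b \<noteq> 0} \<and> {b. v b \<noteq> 0} \<subseteq> S}"
    using F by (auto intro: finite_subset)
next
  fix v :: lelt assume v: "v \<in> {v. finite {b. v b \<noteq> 0} \<and> {b. v b \<noteq> 0} \<subseteq> S}"
  have "v = (\<lambda>d. \<Sum>b\<in>{b. v b \<noteq> 0}. v b * bvec b d)"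
    using v unfolding bvec_def by (auto simp: if_distrib[where f="\<lambda>x. _ * x"] sum.delta' cong: if_cong)
  then show "v \<in> zspan S" using v unfolding zspan_def by blast
qed

lemma brb_fin: "finite {d. brb b c d \<noteq> 0}"
proof -
  obtain L k where bk: "b = (L,k)" by (cases b)
  obtain T l where cl: "c = (T,l)" by (cases c)
  have "\<exists>e. {d. brb b c d \<noteq> 0} \<subseteq> {e}"
    unfolding brb_def bk cl smul_def bvec_def by auto
  then show ?thesis by (meson finite.emptyI finite_insert finite_subset)
qed

theorem corollary3p2:
  fixes n :: nat and j :: int
  assumes "n \<ge> 3" and "j \<ge> 0"
  shows "NN n j \<subseteq> normB n (zspan (NN n (j - 1)))"
proof
  fix b assume b: "b \<in> NN n j"
  have bB: "b \<in> Bas n" using b unfolding NN_def by auto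
  show "b \<in> normB n (zspan (NN n (j - 1)))"
    unfolding normB_def
  proof (intro CollectI conjI ballI bB)
    fix m assume "m \<in> zspan (NN n (j - 1))"
    then have mf: "finite {c. m c \<noteq> 0}" and ms: "{c. m c \<noteq> 0} \<subseteq> NN n (j - 1)"
      unfolding zspan_char by auto
    have sb: "{c. bvec b c \<noteq> 0} = {b}" unfolding bvec_def by auto
    have br: "br (bvec b) m = (\<lambda>d. \<Sum>c\<in>{c. m c \<noteq> 0}. m c * brb b c d)"
      unfolding br_def sb by (simp add: bvec_def)
    have sub: "{d. br (bvec b) m d \<noteq> 0} \<subseteq> (\<Union>c\<in>{c. m c \<noteq> 0}. {d. brb b c d \<noteq> 0})"
    proof
      fix d assume "d \<in> {d. br (bvec b) m d \<noteq> 0}"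
      then have "(\<Sum>c\<in>{c. m c \<noteq> 0}. m c * brb b c d) \<noteq> 0" unfolding br by simp
      then obtain c where "c \<in> {c. m c \<noteq> 0}" "m c * brb b c d \<noteq> 0"
        by (meson sum.neutral)
      then show "d \<in> (\<Union>c\<in>{c. m c \<noteq> 0}. {d. brb b c d \<noteq> 0})"
        by (intro UN_I[of c]) auto
    qed
    have "finite (\<Union>c\<in>{c. m c \<noteq> 0}. {d. brb b c d \<noteq> 0})" using mf brb_fin by auto
    moreover have "(\<Union>c\<in>{c. m c \<noteq> 0}. {d. brb b c d \<noteq> 0}) \<subseteq> NN n (j - 1)"
      using K[OF assms b] ms by blast
    ultimately show "br (bvec b) m \<in> zspan (NN n (j - 1))"
      unfolding zspan_char using sub by (auto intro: finite_subset)
  qed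
qed

end
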